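(* Let $p,q\ge 2$. (i) If $M_1, M_2 \subset \widetilde{\mathrm{Ein}}^{p,q}$ are two Minkowski patches, then $\pi_{\mathbf{X}}(M_1 \cap \iota(M_2))$ is the complement of $\pi_{\mathbf{X}}(M_1 \cap M_2)$ in $\pi_{\mathbf{X}}(M_1) \cap \pi_{\mathbf{X}}(M_2)$. (ii) If $M_1, M_2, M_3 \subset \widetilde{\mathrm{Ein}}^{p,q}$ are three Minkowski patches with $M_1 \cap M_3 = M_2 \cap M_3$, then $M_1 = M_2$.
   Context: $\widetilde{\mathrm{Ein}}^{p,q}\cong\mathbb{S}^p\times\mathbb{S}^q$ is the set of isotropic vectors of Euclidean norm $1$ in $\mathbb{R}^{p+1,q+1}$, $\pi_{\mathbf{X}}$ its double cover onto $\mathrm{Ein}^{p,q}$ (isotropic lines, with induced conformal structure), and $\iota$ the product of antipodal maps. Minkowski patches of $\mathrm{Ein}^{p,q}$ are $M_x=\{[w]:B(v,w)\neq0\}$ for $x=[v]$ isotropic; those of $\widetilde{\mathrm{Ein}}^{p,q}$ are the connected components of $\pi_{\mathbf{X}}^{-1}(M_x)$. *)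

theory Defs
  imports "HOL-Analysis.Analysis"
begin

text \<open>R^{p+1,q+1} is modelled as 'a \<times> 'b with DIM('a) = p+1, DIM('b) = q+1,
  equipped with the bilinear form of signature (p+1,q+1).\<close>

definition B :: "('a::euclidean_space \<times> 'b::euclidean_space) \<Rightarrow> ('a \<times> 'b) \<Rightarrow> real" where
  "B v w = fst v \<bullet> fst w - snd v \<bullet> snd w"

definition EinT :: "('a::euclidean_space \<times> 'b::euclidean_space) set" where
  "EinT = {v. B v v = 0 \<and> norm v = 1}"

text \<open>A point of Ein (an isotropic line) is represented as the line itself.\<close>
definition piX :: "('a::euclidean_space \<times> 'b::euclidean_space) \<Rightarrow> ('a \<times> 'b) set" where
  "piX v = {t *\<^sub>R v | t. True}"

text \<open>Product of the antipodal maps.\<close>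
definition iota :: "('a::euclidean_space \<times> 'b::euclidean_space) \<Rightarrow> ('a \<times> 'b)" where
  "iota v = - v"

text \<open>Preimage in Ein-tilde of the Minkowski patch M_x, x = [v].\<close>
definition preM :: "('a::euclidean_space \<times> 'b::euclidean_space) \<Rightarrow> ('a \<times> 'b) set" where
  "preM v = {w \<in> EinT. B v w \<noteq> 0}"

definition mink_patch :: "('a::euclidean_space \<times> 'b::euclidean_space) set \<Rightarrow> bool" where
  "mink_patch M \<longleftrightarrow> (\<exists>v w. v \<noteq> 0 \<and> B v v = 0 \<and> w \<in> preM v \<and>
       M = connected_component_set (preM v) w)"

end

theory Submission
  imports Defs
begin


lemma cap_connected:
  fixes n :: "'c::euclidean_space"
  assumes n1: "norm n = 1" and cR: "\<bar>c\<bar> < R"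
  shows "connected {q. norm q = R \<and> n \<bullet> q > c}"
proof -
  define p where "p = c *\<^sub>R n"
  have nn: "n \<bullet> n = 1" using n1 by (simp add: dot_square_norm)
  have np: "n \<bullet> p = c" by (simp add: p_def nn)
  have pp: "p \<bullet> p = c^2" by (simp add: p_def nn power2_eq_square)
  have R0: "R > 0" using cR by linarith
  have pR: "p \<bullet> p < R^2" using cR pp by (metis abs_ge_zero power_strict_mono abs_square_less_1 power2_abs zero_less_numeral less_le_trans) 
  define tt where "tt z = (- (p \<bullet> (z-p)) + sqrt ((p \<bullet> (z-p))^2 + ((z-p) \<bullet> (z-p))*(R^2 - p \<bullet> p))) / ((z-p) \<bullet> (z-p))" for z
  define phi where "phi z = p + tt z *\<^sub>R (z - p)" for z
  define H where "H = {z. n \<bullet> z > c}"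
  have uH: "z - p \<noteq> 0" if "z \<in> H" for z
    using that np by (auto simp: H_def)
  have "connected H" unfolding H_def by (rule convex_connected) (rule convex_halfspace_gt)
  moreover have "continuous_on H phi"
    unfolding phi_def tt_def
    by (intro continuous_intros) (use uH in auto)
  ultimately have conn: "connected (phi ` H)" by (rule connected_continuous_image[rotated])
  have "phi ` H = {q. norm q = R \<and> n \<bullet> q > c}"
  proof
    show "phi ` H \<subseteq> {q. norm q = R \<and> n \<bullet> q > c}"
    proof
      fix y assume "y \<in> phi ` H"
      then obtain z where zH: "z \<in> H" and y: "y = phi z" by auto
      define u where "u = z - p"
      define k where "k = p \<bullet> u"
      define m where "m = u \<bullet> u"
      define D where "D = k^2 + m * (R^2 - p \<bullet> p)"
      define s where "s = sqrt D"
      have nu: "n \<bullet> u > 0" using zH np by (simp add: H_def u_def inner_diff_right)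
      have m0: "m > 0" using uH[OF zH] by (simp add: m_def u_def)
      have D: "D > k^2" using m0 pR by (simp add: D_def)
      have s2: "s^2 = D" using D by (simp add: s_def) (smt (verit) zero_le_power2)
      have sk: "s > \<bar>k\<bar>" unfolding s_def using D
        by (metis real_sqrt_abs real_sqrt_less_mono)
      define t where "t = (- k + s) / m"
      have tz: "tt z = t" by (simp add: tt_def t_def s_def D_def k_def m_def u_def)
      have t0: "t > 0" using sk m0 by (simp add: t_def)
      have tm: "t * m = - k + s" using m0 by (simp add: t_def)
      have yy: "y = p + t *\<^sub>R u" by (simp add: y phi_def tz u_def)
      have "y \<bullet> y = p \<bullet> p + 2 * t * k + t^2 * m"
        by (simp add: yy inner_add_left inner_add_right k_def m_def inner_commute power2_eq_square algebra_simps)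
      also have "\<dots> = p \<bullet> p + t * (k + s)"
      proof -
        have e: "t^2 * m = t * (t*m)" by (simp add: power2_eq_square)
        have e2: "t * (s - k) = t * s - t * k" "t * (k + s) = t * k + t * s" by (simp_all add: algebra_simps)
        have e3: "t^2 * m = t * s - t * k" using e tm e2(1) by simp
        show ?thesis by (simp only: e3 e2(2))
      qed
      also have "t * (k + s) = (s - k) * (s + k) / m" using tm m0
        by (simp add: t_def field_simps)
      also have "\<dots> = (D - k^2) / m" using s2 by (simp add: power2_eq_square algebra_simps)
      also have "\<dots> = R^2 - p \<bullet> p" using m0 by (simp add: D_def)
      finally have "y \<bullet> y = R^2" by simp
      hence "norm y = R" using R0 by (metis norm_eq_sqrt_inner real_sqrt_unique less_le)
      moreover have "n \<bullet> y > c" using np t0 nu by (simp add: yy inner_add_right)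
      ultimately show "y \<in> {q. norm q = R \<and> n \<bullet> q > c}" by simp
    qed
  next
    show "{q. norm q = R \<and> n \<bullet> q > c} \<subseteq> phi ` H"
    proof
      fix q assume q: "q \<in> {q. norm q = R \<and> n \<bullet> q > c}"
      hence qH: "q \<in> H" by (simp add: H_def)
      have qq: "q \<bullet> q = R^2" using q by (simp add: dot_square_norm)
      define u where "u = q - p"
      define k where "k = p \<bullet> u"
      define m where "m = u \<bullet> u"
      have m0: "m > 0" using uH[OF qH] by (simp add: m_def u_def)
      have e1: "m + 2 * k + p \<bullet> p = R^2" using qq
        by (simp add: m_def k_def u_def inner_diff_left inner_diff_right inner_commute)
      have "p \<bullet> q \<le> norm p * norm q" by (rule norm_cauchy_schwarz)
      moreover have "norm p < R" using cR by (simp add: p_def n1)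
      ultimately have "p \<bullet> q < R * R" using q R0
        by (smt (verit) mult_strict_right_mono mem_Collect_eq)
      hence mk: "m + k > 0" using qq
        by (simp add: m_def k_def u_def inner_diff_left inner_diff_right inner_commute power2_eq_square)
      have e1': "R^2 - p \<bullet> p = m + 2 * k" using e1 by linarith
      have Deq: "k^2 + m * (R^2 - p \<bullet> p) = (m + k)^2"
        unfolding e1' by (simp add: power2_eq_square algebra_simps)
      have "tt q = (- k + sqrt (k^2 + m * (R^2 - p \<bullet> p))) / m"
        unfolding tt_def k_def m_def u_def by (rule refl)
      also have "\<dots> = (- k + (m + k)) / m" unfolding Deq using mk by simp
      also have "\<dots> = 1" using m0 by simp
      finally have "tt q = 1" .
      hence "phi q = q" by (simp add: phi_def)
      thus "q \<in> phi ` H" using qH by (metis image_eqI)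
    qed
  qed
  thus ?thesis using conn by simp
qed



lemma B_pair: "B (x,y) (a,b) = x \<bullet> a - y \<bullet> b" by (simp add: B_def)
lemma B_inner: "B v w = (fst v, - snd v) \<bullet> w" by (cases v, cases w) (simp add: B_def)
lemma B_neg: "B v (-w) = - B v w" "B (-v) w = - B v w" by (simp_all add: B_def)

definition rr :: real where "rr = sqrt (1/2)"

lemma rr_pos: "rr > 0" by (simp add: rr_def)
lemma rr_sq: "rr^2 = 1/2" by (simp add: rr_def)

lemma EinT_iff: "(a,b) \<in> EinT \<longleftrightarrow> norm a = rr \<and> norm b = rr"
proof -
  have "(a,b) \<in> EinT \<longleftrightarrow> (norm a)^2 = (norm b)^2 \<and> (norm a)^2 + (norm b)^2 = 1"
    by (simp add: EinT_def B_def norm_Pair dot_square_norm)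
  also have "\<dots> \<longleftrightarrow> (norm a)^2 = 1/2 \<and> (norm b)^2 = 1/2"
  proof -
    have "\<And>p q::real. (p = q \<and> p + q = 1) \<longleftrightarrow> (p = 1/2 \<and> q = 1/2)" by auto
    thus ?thesis by blast
  qed
  also have "\<dots> \<longleftrightarrow> norm a = rr \<and> norm b = rr"
    by (metis norm_ge_zero real_sqrt_unique rr_def rr_sq)
  finally show ?thesis .
qed

lemma EinT_neg: "- w \<in> EinT \<longleftrightarrow> w \<in> EinT"
  by (simp add: EinT_def B_def)

definition Pp :: "('a::euclidean_space \<times> 'b::euclidean_space) \<Rightarrow> ('a \<times> 'b) set" where
  "Pp v = {w \<in> EinT. B v w > 0}"

lemma Pp_connected:
  fixes v :: "'a::euclidean_space \<times> 'b::euclidean_space"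
  assumes v0: "v \<noteq> 0" and vv: "B v v = 0"
  shows "connected (Pp v)"
proof -
  obtain x y where v: "v = (x,y)" by (cases v)
  have "x \<bullet> x = y \<bullet> y" using vv by (simp add: v B_def)
  hence nxy: "norm x = norm y" by (simp add: norm_eq_sqrt_inner)
  define s where "s = norm x"
  have s0: "s > 0" using v0 nxy by (auto simp: s_def v zero_prod_def)
  define xn where "xn = x /\<^sub>R s"
  define yn where "yn = - (y /\<^sub>R s)"
  have nxn: "norm xn = 1" using s0 by (simp add: xn_def s_def)
  have nyn: "norm yn = 1" using s0 nxy by (simp add: yn_def s_def)
  have Bv: "B v (a,b) = s * (xn \<bullet> a + yn \<bullet> b)" for a b
    using s0 by (simp add: v B_def xn_def yn_def algebra_simps mult.assoc[symmetric])
  define CA where "CA t = {a. norm a = rr \<and> xn \<bullet> a > t}" for t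
  define CB where "CB t = {b. norm b = rr \<and> yn \<bullet> b > t}" for t
  have eq: "Pp v = \<Union> ((\<lambda>t. CA t \<times> CB (-t)) ` {-rr<..<rr})"
  proof (rule set_eqI)
    fix w :: "'a \<times> 'b"
    obtain a b where w: "w = (a,b)" by (cases w)
    show "w \<in> Pp v \<longleftrightarrow> w \<in> \<Union> ((\<lambda>t. CA t \<times> CB (-t)) ` {-rr<..<rr})"
    proof
      assume "w \<in> Pp v"
      hence na: "norm a = rr" and nb: "norm b = rr" and pos: "xn \<bullet> a + yn \<bullet> b > 0"
        using s0 by (auto simp: Pp_def w EinT_iff Bv zero_less_mult_iff)
      have ca: "xn \<bullet> a \<le> rr" using norm_cauchy_schwarz[of xn a] na nxn by simp
      have cb: "yn \<bullet> b \<le> rr" using norm_cauchy_schwarz[of yn b] nb nyn by simp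
      define t where "t = (xn \<bullet> a - yn \<bullet> b) / 2"
      have "t \<in> {-rr<..<rr}" using ca cb pos by (auto simp: t_def)
      moreover have "w \<in> CA t \<times> CB (-t)" using na nb pos by (auto simp: w CA_def CB_def t_def field_simps)
      ultimately show "w \<in> \<Union> ((\<lambda>t. CA t \<times> CB (-t)) ` {-rr<..<rr})" by blast
    next
      assume "w \<in> \<Union> ((\<lambda>t. CA t \<times> CB (-t)) ` {-rr<..<rr})"
      then obtain t where "a \<in> CA t" "b \<in> CB (-t)" by (auto simp: w)
      thus "w \<in> Pp v" using s0 by (auto simp: Pp_def w EinT_iff Bv CA_def CB_def)
    qed
  qed
  show ?thesis unfolding eq
  proof (rule connected_Union)
    fix S assume "S \<in> (\<lambda>t. CA t \<times> CB (-t)) ` {-rr<..<rr}"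
    then obtain t where t0: "t \<in> {-rr<..<rr}" and S: "S = CA t \<times> CB (-t)" by blast
    have t: "\<bar>t\<bar> < rr" using t0 by auto
    have "connected (CA t)" unfolding CA_def using cap_connected[OF nxn, of t rr] t by simp
    moreover have "connected (CB (-t))" unfolding CB_def using cap_connected[OF nyn, of "-t" rr] t by simp
    ultimately show "connected S" unfolding S by (rule connected_Times)
  next
    have "(rr *\<^sub>R xn, rr *\<^sub>R yn) \<in> \<Inter> ((\<lambda>t. CA t \<times> CB (-t)) ` {-rr<..<rr})"
      using nxn nyn rr_pos by (auto simp: CA_def CB_def dot_square_norm)
    thus "\<Inter> ((\<lambda>t. CA t \<times> CB (-t)) ` {-rr<..<rr}) \<noteq> {}" by blast
  qed
qed


lemma normal_form:
  fixes v :: "'a::euclidean_space \<times> 'b::euclidean_space"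
  assumes v0: "v \<noteq> 0" and vv: "B v v = 0"
  obtains s xn yn where "s > 0" "norm xn = 1" "norm yn = 1" "\<And>a b. B v (a,b) = s * (xn \<bullet> a + yn \<bullet> b)"
proof -
  obtain x y where v: "v = (x,y)" by (cases v)
  have "x \<bullet> x = y \<bullet> y" using vv by (simp add: v B_def)
  hence nxy: "norm x = norm y" by (simp add: norm_eq_sqrt_inner)
  define s where "s = norm x"
  have s0: "s > 0" using v0 nxy by (auto simp: s_def v zero_prod_def)
  define xn where "xn = x /\<^sub>R s"
  define yn where "yn = - (y /\<^sub>R s)"
  have nxn: "norm xn = 1" using s0 by (simp add: xn_def s_def)
  have nyn: "norm yn = 1" using s0 nxy by (simp add: yn_def s_def)
  have Bv: "B v (a,b) = s * (xn \<bullet> a + yn \<bullet> b)" for a b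
    using s0 by (simp add: v B_def xn_def yn_def algebra_simps mult.assoc[symmetric])
  show ?thesis using that s0 nxn nyn Bv by blast
qed

lemma Pp_nf:
  assumes "s > 0" "\<And>a b. B v (a,b) = s * (xn \<bullet> a + yn \<bullet> b)"
  shows "(a,b) \<in> Pp v \<longleftrightarrow> norm a = rr \<and> norm b = rr \<and> xn \<bullet> a + yn \<bullet> b > 0"
  using assms by (auto simp: Pp_def EinT_iff zero_less_mult_iff)

lemma comp_eq:
  fixes v :: "'a::euclidean_space \<times> 'b::euclidean_space"
  assumes v0: "v \<noteq> 0" and vv: "B v v = 0" and w: "w \<in> Pp v"
  shows "connected_component_set (preM v) w = Pp v"
proof
  have sub: "Pp v \<subseteq> preM v" by (auto simp: Pp_def preM_def)
  show "Pp v \<subseteq> connected_component_set (preM v) w"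
    by (rule connected_component_maximal) (use assms sub Pp_connected[OF v0 vv] in auto)
  show "connected_component_set (preM v) w \<subseteq> Pp v"
  proof
    fix z assume z: "z \<in> connected_component_set (preM v) w"
    define C where "C = connected_component_set (preM v) w"
    have Cc: "connected C" by (simp add: C_def)
    have Cs: "C \<subseteq> preM v" by (simp add: C_def connected_component_subset)
    have wC: "w \<in> C" using w sub by (auto simp: C_def connected_component_refl)
    have zC: "z \<in> C" using z by (simp add: C_def)
    have zp: "z \<in> EinT" "B v z \<noteq> 0" using Cs zC by (auto simp: preM_def)
    show "z \<in> Pp v"
    proof (rule ccontr)
      assume "z \<notin> Pp v"
      hence "B v z < 0" using zp by (auto simp: Pp_def)
      hence "(fst v, - snd v) \<bullet> z \<le> 0" "0 \<le> (fst v, - snd v) \<bullet> w"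
        using w by (auto simp: B_inner[symmetric] Pp_def)
      then obtain u where "u \<in> C" "(fst v, - snd v) \<bullet> u = 0"
        using connected_ivt_hyperplane[OF Cc zC wC] by blast
      thus False using Cs by (auto simp: preM_def B_inner)
    qed
  qed
qed

lemma patch_char:
  fixes M :: "('a::euclidean_space \<times> 'b::euclidean_space) set"
  assumes "mink_patch M"
  obtains v where "v \<noteq> 0" "B v v = 0" "M = Pp v"
proof -
  obtain v w where v0: "v \<noteq> 0" and vv: "B v v = 0" and w: "w \<in> preM v"
    and M: "M = connected_component_set (preM v) w"
    using assms unfolding mink_patch_def by blast
  show ?thesis
  proof (cases "B v w > 0")
    case True
    hence "w \<in> Pp v" using w by (simp add: Pp_def preM_def)
    thus ?thesis using that v0 vv M comp_eq by blast
  next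
    case False
    hence neg: "B (-v) w > 0" using w by (simp add: preM_def B_neg)
    hence wP: "w \<in> Pp (-v)" using w by (simp add: Pp_def preM_def)
    have pm: "preM (-v) = preM v" by (auto simp: preM_def B_neg)
    have v0': "-v \<noteq> 0" using v0 by simp
    have vv': "B (-v) (-v) = 0" using vv by (simp add: B_def)
    have "M = Pp (-v)" using comp_eq[OF v0' vv' wP] pm M by simp
    thus ?thesis using that v0' vv' by blast
  qed
qed

lemma piX_neg: "piX (-w) = piX w"
  unfolding piX_def
proof (intro set_eqI iffI)
  fix z assume "z \<in> {t *\<^sub>R - w |t. True}"
  then obtain t where "z = t *\<^sub>R - w" by auto
  hence "z = (-t) *\<^sub>R w" by simp
  thus "z \<in> {t *\<^sub>R w |t. True}" by blast
next
  fix z assume "z \<in> {t *\<^sub>R w |t. True}"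
  then obtain t where "z = t *\<^sub>R w" by auto
  hence "z = (-t) *\<^sub>R - w" by simp
  thus "z \<in> {t *\<^sub>R - w |t. True}" by blast
qed

lemma piX_eq:
  assumes "w \<in> EinT" "w' \<in> EinT" "piX w = piX w'"
  shows "w' = w \<or> w' = -w"
proof -
  have "w' \<in> piX w'" unfolding piX_def by (metis (mono_tags, lifting) mem_Collect_eq scaleR_one)
  then obtain t where t: "w' = t *\<^sub>R w" using assms(3) by (auto simp: piX_def)
  have "norm w = 1" "norm w' = 1" using assms by (auto simp: EinT_def)
  hence "\<bar>t\<bar> = 1" using t by simp
  hence "t = 1 \<or> t = -1" by auto
  thus ?thesis using t by auto
qed

lemma iota_Pp: "iota ` Pp v = {w \<in> EinT. B v w < 0}"
proof (intro set_eqI iffI)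
  fix w assume "w \<in> iota ` Pp v"
  then obtain u where "u \<in> Pp v" "w = -u" by (auto simp: iota_def)
  thus "w \<in> {w \<in> EinT. B v w < 0}" by (simp add: Pp_def EinT_neg B_neg)
next
  fix w assume w: "w \<in> {w \<in> EinT. B v w < 0}"
  hence "-w \<in> Pp v" by (auto simp: Pp_def EinT_neg B_neg)
  moreover have "w = iota (-w)" by (simp add: iota_def)
  ultimately show "w \<in> iota ` Pp v" by blast
qed

lemma part1:
  "piX ` (Pp v1 \<inter> iota ` Pp v2) = (piX ` Pp v1 \<inter> piX ` Pp v2) - piX ` (Pp v1 \<inter> Pp v2)"
proof (intro set_eqI iffI)
  fix L assume "L \<in> piX ` (Pp v1 \<inter> iota ` Pp v2)"
  then obtain w where L: "L = piX w" and w1: "w \<in> Pp v1" and w2: "w \<in> EinT" "B v2 w < 0"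
    by (auto simp: iota_Pp)
  have "-w \<in> Pp v2" using w2 by (simp add: Pp_def EinT_neg B_neg)
  hence "L \<in> piX ` Pp v2" using L piX_neg by (metis image_eqI)
  moreover have "L \<in> piX ` Pp v1" using L w1 by blast
  moreover have "L \<notin> piX ` (Pp v1 \<inter> Pp v2)"
  proof
    assume "L \<in> piX ` (Pp v1 \<inter> Pp v2)"
    then obtain w' where w': "w' \<in> Pp v1" "w' \<in> Pp v2" "piX w = piX w'" using L by auto
    hence "w' = w \<or> w' = -w" using piX_eq[OF w2(1)] by (auto simp: Pp_def)
    thus False using w' w1 w2 by (auto simp: Pp_def B_neg)
  qed
  ultimately show "L \<in> (piX ` Pp v1 \<inter> piX ` Pp v2) - piX ` (Pp v1 \<inter> Pp v2)" by blast
next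
  fix L assume L: "L \<in> (piX ` Pp v1 \<inter> piX ` Pp v2) - piX ` (Pp v1 \<inter> Pp v2)"
  then obtain w1 w2 where w1: "w1 \<in> Pp v1" and w2: "w2 \<in> Pp v2" and e1: "L = piX w1" and e2: "L = piX w2"
    by blast
  have "w2 = w1 \<or> w2 = -w1" using piX_eq[of w1 w2] w1 w2 e1 e2 by (auto simp: Pp_def)
  moreover have "w2 \<noteq> w1" using L w1 w2 e1 by blast
  ultimately have "w2 = -w1" by blast
  hence "w1 \<in> iota ` Pp v2" using w2 by (metis iota_def image_eqI minus_minus)
  thus "L \<in> piX ` (Pp v1 \<inter> iota ` Pp v2)" using w1 e1 by blast
qed


lemma HL:
  fixes h z1 z2 :: "'c::euclidean_space"
  assumes h0: "h \<noteq> 0" and n1: "norm z1 = 1" and n2: "norm z2 = 1"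
    and H: "\<And>a. h \<bullet> a > 0 \<Longrightarrow> (z1 \<bullet> a > 0 \<longleftrightarrow> z2 \<bullet> a > 0)"
  shows "z1 = z2"
proof (rule ccontr)
  assume ne: "z1 \<noteq> z2"
  define a0 where "a0 = z1 - z2"
  define d where "d = 1 - z1 \<bullet> z2"
  have z11: "z1 \<bullet> z1 = 1" "z2 \<bullet> z2 = 1" using n1 n2 by (simp_all add: dot_square_norm)
  have aa: "a0 \<bullet> a0 = 2 * d" using z11
    by (simp add: a0_def d_def inner_diff_left inner_diff_right inner_commute)
  have "a0 \<noteq> 0" using ne by (simp add: a0_def)
  hence "a0 \<bullet> a0 > 0" by simp
  hence d0: "d > 0" using aa by simp
  have z1a: "z1 \<bullet> a0 = d" and z2a: "z2 \<bullet> a0 = - d" using z11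
    by (simp_all add: a0_def d_def inner_diff_right inner_commute)
  have nh: "norm h > 0" using h0 by simp
  have hh: "h \<bullet> h > 0" using h0 by simp
  define e where "e = d / (2 * norm h)"
  have e0: "e > 0" using d0 nh by (simp add: e_def)
  have eh: "e * norm h = d / 2" using nh by (simp add: e_def)
  have bnd: "\<bar>e * (z \<bullet> h)\<bar> \<le> d / 2" if "norm z = 1" for z
  proof -
    have "\<bar>z \<bullet> h\<bar> \<le> norm h" using Cauchy_Schwarz_ineq2[of z h] that by simp
    hence "e * \<bar>z \<bullet> h\<bar> \<le> e * norm h" using e0 by (simp add: mult_left_mono)
    thus ?thesis using e0 eh by (simp add: abs_mult)
  qed
  have b1: "- (d/2) \<le> e * (z1 \<bullet> h)" "e * (z1 \<bullet> h) \<le> d/2" using bnd[OF n1] by (auto simp: abs_le_iff)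
  have b2: "- (d/2) \<le> e * (z2 \<bullet> h)" "e * (z2 \<bullet> h) \<le> d/2" using bnd[OF n2] by (auto simp: abs_le_iff)
  have ehh: "e * (h \<bullet> h) > 0" using e0 hh by simp
  show False
  proof (cases "h \<bullet> a0 \<ge> 0")
    case True
    define a where "a = a0 + e *\<^sub>R h"
    have "h \<bullet> a > 0" using True ehh by (simp add: a_def inner_add_right)
    moreover have "z1 \<bullet> a > 0" using b1 d0 by (simp add: a_def inner_add_right inner_diff_right z1a)
    moreover have "\<not> z2 \<bullet> a > 0" using b2 d0 by (simp add: a_def inner_add_right inner_diff_right z2a)
    ultimately show False using H by blast
  next
    case False
    define a where "a = - a0 + e *\<^sub>R h"
    have "h \<bullet> a > 0" using False ehh by (simp add: a_def inner_add_right inner_diff_right)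
    moreover have "\<not> z1 \<bullet> a > 0" using b1 d0 by (simp add: a_def inner_add_right inner_diff_right z1a)
    moreover have "z2 \<bullet> a > 0" using b2 d0 by (simp add: a_def inner_add_right inner_diff_right z2a)
    ultimately show False using H by blast
  qed
qed

lemma side:
  fixes x1 x2 x3 :: "'c::euclidean_space" and y1 y2 y3 :: "'d::euclidean_space"
  assumes D: "DIM('d) \<ge> 3" and nx: "norm x1 = 1" "norm x2 = 1" "norm x3 = 1"
   and H: "\<And>a b. norm a = rr \<Longrightarrow> norm b = rr \<Longrightarrow> x3 \<bullet> a + y3 \<bullet> b > 0 \<Longrightarrow>
              (x1 \<bullet> a + y1 \<bullet> b > 0 \<longleftrightarrow> x2 \<bullet> a + y2 \<bullet> b > 0)"
  shows "x1 = x2"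
proof -
  have "card {y1,y2} \<le> 2" by (cases "y1 = y2") auto
  hence "dim {y1,y2} < DIM('d)" using dim_le_card'[of "{y1,y2}"] D by simp
  then obtain b0 where b0: "b0 \<noteq> 0" "\<And>y. y \<in> span {y1,y2} \<Longrightarrow> orthogonal b0 y"
    using orthogonal_to_subspace_exists by blast
  have o1: "y1 \<bullet> b0 = 0" "y2 \<bullet> b0 = 0"
    using b0(2)[of y1] b0(2)[of y2] by (auto simp: span_base orthogonal_def inner_commute)
  define b1 where "b1 = (if y3 \<bullet> b0 \<ge> 0 then b0 else -b0)"
  have b1p: "y3 \<bullet> b1 \<ge> 0" "y1 \<bullet> b1 = 0" "y2 \<bullet> b1 = 0" "b1 \<noteq> 0"
    using o1 b0(1) by (auto simp: b1_def)
  define b where "b = (rr / norm b1) *\<^sub>R b1"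
  have nb: "norm b = rr" using b1p(4) rr_pos by (simp add: b_def)
  have yb: "y3 \<bullet> b \<ge> 0" "y1 \<bullet> b = 0" "y2 \<bullet> b = 0"
    using b1p rr_pos by (simp_all add: b_def)
  show ?thesis
  proof (rule HL[of x3])
    show "x3 \<noteq> 0" using nx by auto
    show "norm x1 = 1" "norm x2 = 1" using nx by auto
    fix a assume xa: "x3 \<bullet> a > 0"
    hence a0: "a \<noteq> 0" by auto
    define k where "k = rr / norm a"
    have k0: "k > 0" using a0 rr_pos by (simp add: k_def)
    define a' where "a' = k *\<^sub>R a"
    have na: "norm a' = rr" using a0 rr_pos by (simp add: a'_def k_def)
    have "k * (x3 \<bullet> a) > 0" using xa k0 by simp
    hence "x3 \<bullet> a' + y3 \<bullet> b > 0" using yb by (simp add: a'_def)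
    hence "x1 \<bullet> a' + y1 \<bullet> b > 0 \<longleftrightarrow> x2 \<bullet> a' + y2 \<bullet> b > 0" using H[OF na nb] by blast
    thus "x1 \<bullet> a > 0 \<longleftrightarrow> x2 \<bullet> a > 0" using k0 yb by (simp add: a'_def zero_less_mult_iff)
  qed
qed

lemma part2:
  fixes v1 v2 v3 :: "'a::euclidean_space \<times> 'b::euclidean_space"
  assumes DA: "DIM('a) \<ge> 3" and DB: "DIM('b) \<ge> 3"
    and v1: "v1 \<noteq> 0" "B v1 v1 = 0" and v2: "v2 \<noteq> 0" "B v2 v2 = 0" and v3: "v3 \<noteq> 0" "B v3 v3 = 0"
    and eq: "Pp v1 \<inter> Pp v3 = Pp v2 \<inter> Pp v3"
  shows "Pp v1 = Pp v2"
proof -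
  obtain s1 x1 y1 where n1: "s1 > 0" "norm x1 = 1" "norm y1 = 1" "\<And>a b. B v1 (a,b) = s1 * (x1 \<bullet> a + y1 \<bullet> b)"
    using normal_form[OF v1] by blast
  obtain s2 x2 y2 where n2: "s2 > 0" "norm x2 = 1" "norm y2 = 1" "\<And>a b. B v2 (a,b) = s2 * (x2 \<bullet> a + y2 \<bullet> b)"
    using normal_form[OF v2] by blast
  obtain s3 x3 y3 where n3: "s3 > 0" "norm x3 = 1" "norm y3 = 1" "\<And>a b. B v3 (a,b) = s3 * (x3 \<bullet> a + y3 \<bullet> b)"
    using normal_form[OF v3] by blast
  note P1 = Pp_nf[of s1 v1 x1 y1, OF n1(1) n1(4)]
  note P2 = Pp_nf[of s2 v2 x2 y2, OF n2(1) n2(4)]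
  note P3 = Pp_nf[of s3 v3 x3 y3, OF n3(1) n3(4)]
  have H: "x1 \<bullet> a + y1 \<bullet> b > 0 \<longleftrightarrow> x2 \<bullet> a + y2 \<bullet> b > 0"
    if "norm a = rr" "norm b = rr" "x3 \<bullet> a + y3 \<bullet> b > 0" for a b
  proof -
    have "(a,b) \<in> Pp v1 \<inter> Pp v3 \<longleftrightarrow> (a,b) \<in> Pp v2 \<inter> Pp v3" using eq by simp
    thus ?thesis using that P1 P2 P3 by auto
  qed
  have x: "x1 = x2" using side[OF DB n1(2) n2(2) n3(2), of y3 y1 y2] H by blast
  have y: "y1 = y2"
  proof (rule side[OF DA n1(3) n2(3) n3(3), of x3 x1 x2])
    fix b a assume "norm b = rr" "norm a = rr" "y3 \<bullet> b + x3 \<bullet> a > 0"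
    thus "y1 \<bullet> b + x1 \<bullet> a > 0 \<longleftrightarrow> y2 \<bullet> b + x2 \<bullet> a > 0" using H[of a b] by (simp add: add.commute)
  qed
  show ?thesis
  proof (rule set_eqI)
    fix w :: "'a \<times> 'b"
    obtain a b where w: "w = (a,b)" by (cases w)
    show "w \<in> Pp v1 \<longleftrightarrow> w \<in> Pp v2" unfolding w P1 P2 x y ..
  qed
qed

theorem lemma2p8:
  assumes "DIM('a::euclidean_space) \<ge> 3" and "DIM('b::euclidean_space) \<ge> 3"
  shows "(\<forall>M1 M2 :: ('a \<times> 'b) set. mink_patch M1 \<and> mink_patch M2 \<longrightarrow>
            piX ` (M1 \<inter> iota ` M2) = (piX ` M1 \<inter> piX ` M2) - piX ` (M1 \<inter> M2)) \<and>
         (\<forall>M1 M2 M3 :: ('a \<times> 'b) set. mink_patch M1 \<and> mink_patch M2 \<and> mink_patch M3 \<and>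
            M1 \<inter> M3 = M2 \<inter> M3 \<longrightarrow> M1 = M2)"
proof (intro conjI allI impI)
  fix M1 M2 :: "('a \<times> 'b) set"
  assume "mink_patch M1 \<and> mink_patch M2"
  then obtain v1 v2 where "M1 = Pp v1" "M2 = Pp v2" using patch_char by metis
  thus "piX ` (M1 \<inter> iota ` M2) = (piX ` M1 \<inter> piX ` M2) - piX ` (M1 \<inter> M2)"
    using part1 by simp
next
  fix M1 M2 M3 :: "('a \<times> 'b) set"
  assume h: "mink_patch M1 \<and> mink_patch M2 \<and> mink_patch M3 \<and> M1 \<inter> M3 = M2 \<inter> M3"
  obtain v1 where v1: "v1 \<noteq> 0" "B v1 v1 = 0" "M1 = Pp v1" using h patch_char by metis
  obtain v2 where v2: "v2 \<noteq> 0" "B v2 v2 = 0" "M2 = Pp v2" using h patch_char by metis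
  obtain v3 where v3: "v3 \<noteq> 0" "B v3 v3 = 0" "M3 = Pp v3" using h patch_char by metis
  show "M1 = M2" using part2[OF assms v1(1,2) v2(1,2) v3(1,2)] h v1(3) v2(3) v3(3) by simp
qed

end
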